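(* Let $q=2^s$, $s\ge 1$, and let $C_2\subseteq C_1\subseteq\mathbb F_q^n$ be $\mathbb F_q$-linear codes. If $T^{\otimes n}$ maps $\mathrm{CSS}(C_1,C_2)$ into itself, then $(T^{(\lambda)})^{\otimes n}$ maps $\mathrm{CSS}(C_1,C_2)$ into itself for every $\lambda\in\mathbb F_q$.
   Context: Let $q=2^s$ and $\mathrm{tr}:\mathbb F_q\to\mathbb F_2$, $\mathrm{tr}(x)=\sum_{i=0}^{s-1}x^{2^i}$, the absolute trace. Let $\mathcal H=\mathbb C^q$ with orthonormal basis $\{|x\rangle:x\in\mathbb F_q\}$ and $\mathcal H^{\otimes n}$ with basis $|x\rangle=|x_1\rangle\otimes\cdots\otimes|x_n\rangle$, $x\in\mathbb F_q^n$. For $\lambda\in\mathbb F_q$, $T^{(\lambda)}=\sum_{x\in\mathbb F_q}e^{i\pi\,\mathrm{tr}(\lambda x)/4}|x\rangle\langle x|$, where $\mathrm{tr}(\lambda x)\in\{0,1\}$ is regarded as an integer; $T=T^{(1)}$. For $\mathbb F_q$-linear codes $C_2\subseteq C_1\subseteq\mathbb F_q^n$, the CSS code $\mathrm{CSS}(C_1,C_2)\subseteq\mathcal H^{\otimes n}$ is the complex linear span of the states $|w+C_2\rangle=|C_2|^{-1/2}\sum_{c\in C_2}|w+c\rangle$ for $w\in C_1$. *)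

theory Defs
  imports "HOL-Analysis.Analysis"
begin

text \<open>Absolute trace F_q -> F_2 for q = 2^s, valued in F_q (its image is {0,1}).\<close>
definition abs_trace :: "nat \<Rightarrow> 'a::field \<Rightarrow> 'a" where
  "abs_trace s x = (\<Sum>i<s. x ^ (2 ^ i))"

definition trace_int :: "nat \<Rightarrow> 'a::field \<Rightarrow> int" where
  "trace_int s y = (if abs_trace s y = 0 then 0 else 1)"

definition linear_code :: "('a::field ^ 'n) set \<Rightarrow> bool" where
  "linear_code C \<longleftrightarrow> 0 \<in> C \<and> (\<forall>x\<in>C. \<forall>y\<in>C. x + y \<in> C) \<and> (\<forall>c. \<forall>x\<in>C. c *s x \<in> C)"

text \<open>States in H^{\<otimes>n} = C^(F_q^n), written as coefficient functions in the basis |x>.\<close>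
type_synonym ('a, 'n) state = "'a ^ 'n \<Rightarrow> complex"

definition cspan :: "('a, 'n) state set \<Rightarrow> ('a, 'n) state set" where
  "cspan S = {\<psi>. \<exists>A g. finite A \<and> A \<subseteq> S \<and> \<psi> = (\<lambda>x. \<Sum>v\<in>A. g v * v x)}"

definition coset_state :: "('a::field ^ 'n) set \<Rightarrow> 'a ^ 'n \<Rightarrow> ('a, 'n) state" where
  "coset_state C2 w = (\<lambda>x. \<Sum>c\<in>C2. (if x = w + c then complex_of_real (1 / sqrt (real (card C2))) else 0))"

definition CSS :: "('a::field ^ 'n) set \<Rightarrow> ('a ^ 'n) set \<Rightarrow> ('a, 'n) state set" where
  "CSS C1 C2 = cspan (coset_state C2 ` C1)"

definition T_lambda_tensor :: "nat \<Rightarrow> 'a::field \<Rightarrow> ('a, 'n::finite) state \<Rightarrow> ('a, 'n) state" where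
  "T_lambda_tensor s lam \<psi> = (\<lambda>x. (\<Prod>i\<in>UNIV. exp (\<i> * complex_of_real pi * of_int (trace_int s (lam * x $ i)) / 4)) * \<psi> x)"

end

theory Submission
  imports Defs
begin

lemma smult_cancel_aux:
  fixes x :: "'a::field ^ 'n"
  assumes "\<mu> \<noteq> 0"
  shows "inverse \<mu> *s (\<mu> *s x) = x" and "\<mu> *s (inverse \<mu> *s x) = x"
  using assms by (simp_all add: vector_smult_assoc)

lemma smult_eq_iff_aux:
  fixes x y :: "'a::field ^ 'n"
  assumes "\<mu> \<noteq> 0"
  shows "(\<mu> *s x = y) = (x = inverse \<mu> *s y)"
  using smult_cancel_aux[OF assms] by metis

lemma coset_state_scale:
  fixes C2 :: "('a::field ^ 'n) set"
  assumes lin: "linear_code C2" and mu: "\<mu> \<noteq> 0"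
  shows "coset_state C2 w (\<mu> *s x) = coset_state C2 (inverse \<mu> *s w) x"
proof -
  let ?k = "complex_of_real (1 / sqrt (real (card C2)))"
  have img: "(\<lambda>c. \<mu> *s c) ` C2 = C2"
  proof
    show "(\<lambda>c. \<mu> *s c) ` C2 \<subseteq> C2" using lin unfolding linear_code_def by auto
    show "C2 \<subseteq> (\<lambda>c. \<mu> *s c) ` C2"
    proof
      fix c assume "c \<in> C2"
      then have "inverse \<mu> *s c \<in> C2" using lin unfolding linear_code_def by auto
      moreover have "c = \<mu> *s (inverse \<mu> *s c)" by (simp add: vector_smult_assoc mu)
      ultimately show "c \<in> (\<lambda>c. \<mu> *s c) ` C2" by blast
    qed
  qed
  have inj: "inj_on (\<lambda>c. \<mu> *s c) C2"
    by (rule inj_onI) (metis smult_cancel_aux(1)[OF mu])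
  have "coset_state C2 w (\<mu> *s x) = (\<Sum>c\<in>(\<lambda>c. \<mu> *s c) ` C2. if \<mu> *s x = w + c then ?k else 0)"
    unfolding coset_state_def using img by simp
  also have "\<dots> = (\<Sum>c\<in>C2. if \<mu> *s x = w + \<mu> *s c then ?k else 0)"
    by (subst sum.reindex[OF inj]) simp
  also have "\<dots> = (\<Sum>c\<in>C2. if x = inverse \<mu> *s w + c then ?k else 0)"
  proof (rule sum.cong[OF refl])
    fix c
    have "(\<mu> *s x = w + \<mu> *s c) = (x = inverse \<mu> *s (w + \<mu> *s c))"
      by (rule smult_eq_iff_aux[OF mu])
    also have "inverse \<mu> *s (w + \<mu> *s c) = inverse \<mu> *s w + c"
      using smult_cancel_aux[OF mu] by (simp add: vector_add_ldistrib)
    finally show "(if \<mu> *s x = w + \<mu> *s c then ?k else 0) = (if x = inverse \<mu> *s w + c then ?k else 0)"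
      by simp
  qed
  also have "\<dots> = coset_state C2 (inverse \<mu> *s w) x" unfolding coset_state_def by simp
  finally show ?thesis .
qed

lemma CSS_scale:
  fixes C1 C2 :: "('a::field ^ 'n) set"
  assumes l1: "linear_code C1" and l2: "linear_code C2" and mu: "\<mu> \<noteq> 0"
    and psi: "\<psi> \<in> CSS C1 C2"
  shows "(\<lambda>x. \<psi> (\<mu> *s x)) \<in> CSS C1 C2"
proof -
  obtain A g where A: "finite A" "A \<subseteq> coset_state C2 ` C1" and
    pe: "\<psi> = (\<lambda>x. \<Sum>v\<in>A. g v * v x)"
    using psi unfolding CSS_def cspan_def by blast
  define h where "h = (\<lambda>(v::('a,'n) state) x. v (\<mu> *s x))"
  have inj: "inj_on h A"
  proof (rule inj_onI)
    fix u v assume hh: "h u = h v"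
    show "u = v"
    proof
      fix y
      have "h u (inverse \<mu> *s y) = h v (inverse \<mu> *s y)" using hh by simp
      then show "u y = v y" by (simp add: h_def vector_smult_assoc mu)
    qed
  qed
  have sub: "h ` A \<subseteq> coset_state C2 ` C1"
  proof
    fix u assume "u \<in> h ` A"
    then obtain v where v: "v \<in> A" "u = h v" by blast
    then obtain w where w: "w \<in> C1" "v = coset_state C2 w" using A by blast
    have "u = coset_state C2 (inverse \<mu> *s w)"
      unfolding v w h_def using coset_state_scale[OF l2 mu] by auto
    moreover have "inverse \<mu> *s w \<in> C1" using l1 w unfolding linear_code_def by auto
    ultimately show "u \<in> coset_state C2 ` C1" by blast
  qed
  define g' where "g' = (\<lambda>u. g (the_inv_into A h u))"
  have "(\<lambda>x. \<psi> (\<mu> *s x)) = (\<lambda>x. \<Sum>u\<in>h ` A. g' u * u x)"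
  proof
    fix x
    have "(\<Sum>u\<in>h ` A. g' u * u x) = (\<Sum>v\<in>A. g' (h v) * h v x)"
      by (subst sum.reindex[OF inj]) simp
    also have "\<dots> = (\<Sum>v\<in>A. g v * v (\<mu> *s x))"
      unfolding g'_def using the_inv_into_f_f[OF inj] by (simp add: h_def)
    finally show "\<psi> (\<mu> *s x) = (\<Sum>u\<in>h ` A. g' u * u x)" unfolding pe by simp
  qed
  then show ?thesis unfolding CSS_def cspan_def using A(1) sub by blast
qed

lemma trace_int_zero: "trace_int s (0::'a::field) = 0"
  unfolding trace_int_def abs_trace_def by (subst sum.neutral) auto

theorem mainTheorem7:
  fixes s :: nat
    and C1 C2 :: "('a::{finite,field} ^ 'n::finite) set"
  assumes "CARD('a) = 2 ^ s" and "s \<ge> 1"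
    and "linear_code C1" and "linear_code C2" and "C2 \<subseteq> C1"
    and "\<forall>\<psi>\<in>CSS C1 C2. T_lambda_tensor s (1::'a) \<psi> \<in> CSS C1 C2"
  shows "\<forall>lam::'a. \<forall>\<psi>\<in>CSS C1 C2. T_lambda_tensor s lam \<psi> \<in> CSS C1 C2"
proof (intro allI ballI)
  fix lam :: 'a and \<psi> assume psi: "\<psi> \<in> CSS C1 C2"
  show "T_lambda_tensor s lam \<psi> \<in> CSS C1 C2"
  proof (cases "lam = 0")
    case True
    then have "T_lambda_tensor s lam \<psi> = \<psi>"
      unfolding T_lambda_tensor_def by (simp add: trace_int_zero)
    then show ?thesis using psi by simp
  next
    case False
    define \<phi> where "\<phi> = (\<lambda>y. \<psi> (inverse lam *s y))"
    have phi: "\<phi> \<in> CSS C1 C2" unfolding \<phi>_def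
      by (rule CSS_scale[OF assms(3,4) _ psi]) (use False in simp)
    then have T1: "T_lambda_tensor s 1 \<phi> \<in> CSS C1 C2" using assms(6) by blast
    have "T_lambda_tensor s lam \<psi> = (\<lambda>x. T_lambda_tensor s 1 \<phi> (lam *s x))"
      unfolding T_lambda_tensor_def \<phi>_def by (simp add: vector_smult_assoc False)
    then show ?thesis using CSS_scale[OF assms(3,4) False T1] by simp
  qed
qed

end
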